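(* Let $A, C, D$ be binary random variables, with $A$ taking values $a,\overline{a}$, $C$ taking values $c,\overline{c}$, $D$ taking values $d,\overline{d}$, and let $Y$ be a real random variable with finite expectation. Suppose the joint distribution factorizes as \[ p(A,C,D,Y)=p(D)\,p(C\mid D)\,p(A\mid C)\,p(Y\mid A,C). \] Assume that $C$ and $D$ are dependent, and that every event $\{A=x, C=y, D=z\}$ has positive probability. If $E[Y\mid A,C]$ and $E[A\mid C]$ are both nondecreasing or both nonincreasing in $C$, then $E[Y\mid A,D]$ and $E[A\mid D]$ are both nondecreasing or both nonincreasing in $D$. If $E[Y\mid A,C]$ and $E[A\mid C]$ are one nondecreasing and the other nonincreasing in $C$, then $E[Y\mid A,D]$ and $E[A\mid D]$ are one nondecreasing and the other nonincreasing in $D$.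
   Context: $E[Y\mid A,C]$ is nondecreasing in $C$ if $E[Y\mid a,c]\ge E[Y\mid a,\overline{c}]$ and $E[Y\mid \overline{a},c]\ge E[Y\mid \overline{a},\overline{c}]$, nonincreasing if both inequalities are reversed; analogously for $D$. With $a=1,\overline{a}=0$, $E[A\mid C]=p(a\mid C)$ is nondecreasing in $C$ if $p(a\mid c)\ge p(a\mid\overline{c})$ and nonincreasing if $p(a\mid c)\le p(a\mid\overline{c})$; analogously for $D$. *)

theory Defs
  imports "HOL-Probability.Probability"
begin

text \<open>Binary random variables are modelled as bool-valued maps; the value True
  plays the role of a, c, d and False the role of the barred values.\<close>

definition ev :: "'a measure \<Rightarrow> ('a \<Rightarrow> bool) \<Rightarrow> 'a set" where
  "ev M P = {\<omega> \<in> space M. P \<omega>}"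

definition cond_prob :: "'a measure \<Rightarrow> ('a \<Rightarrow> bool) \<Rightarrow> ('a \<Rightarrow> bool) \<Rightarrow> real" where
  "cond_prob M P Q = measure M (ev M (\<lambda>\<omega>. P \<omega> \<and> Q \<omega>)) / measure M (ev M Q)"

definition cond_exp_ev :: "'a measure \<Rightarrow> ('a \<Rightarrow> real) \<Rightarrow> ('a \<Rightarrow> bool) \<Rightarrow> real" where
  "cond_exp_ev M Y Q = (\<integral>\<omega>. indicator (ev M Q) \<omega> * Y \<omega> \<partial>M) / measure M (ev M Q)"

definition EY_nondec :: "'a measure \<Rightarrow> ('a \<Rightarrow> real) \<Rightarrow> ('a \<Rightarrow> bool) \<Rightarrow> ('a \<Rightarrow> bool) \<Rightarrow> bool" where
  "EY_nondec M Y A X \<longleftrightarrow> (\<forall>x. cond_exp_ev M Y (\<lambda>\<omega>. A \<omega> = x \<and> X \<omega>)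
                                 \<ge> cond_exp_ev M Y (\<lambda>\<omega>. A \<omega> = x \<and> \<not> X \<omega>))"

definition EY_noninc :: "'a measure \<Rightarrow> ('a \<Rightarrow> real) \<Rightarrow> ('a \<Rightarrow> bool) \<Rightarrow> ('a \<Rightarrow> bool) \<Rightarrow> bool" where
  "EY_noninc M Y A X \<longleftrightarrow> (\<forall>x. cond_exp_ev M Y (\<lambda>\<omega>. A \<omega> = x \<and> X \<omega>)
                                 \<le> cond_exp_ev M Y (\<lambda>\<omega>. A \<omega> = x \<and> \<not> X \<omega>))"

text \<open>E[A | X] = p(a | X) nondecreasing / nonincreasing in X.\<close>
definition EA_nondec :: "'a measure \<Rightarrow> ('a \<Rightarrow> bool) \<Rightarrow> ('a \<Rightarrow> bool) \<Rightarrow> bool" where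
  "EA_nondec M A X \<longleftrightarrow> cond_prob M A X \<ge> cond_prob M A (\<lambda>\<omega>. \<not> X \<omega>)"

definition EA_noninc :: "'a measure \<Rightarrow> ('a \<Rightarrow> bool) \<Rightarrow> ('a \<Rightarrow> bool) \<Rightarrow> bool" where
  "EA_noninc M A X \<longleftrightarrow> cond_prob M A X \<le> cond_prob M A (\<lambda>\<omega>. \<not> X \<omega>)"

end

theory Submission
  imports Defs
begin

lemma triple_int:
  fixes g :: "bool \<Rightarrow> bool \<Rightarrow> bool \<Rightarrow> 'a \<Rightarrow> real"
  assumes "\<And>x y z. integrable M (g x y z)"
  shows "(\<integral>\<omega>. (\<Sum>x\<in>UNIV. \<Sum>y\<in>UNIV. \<Sum>z\<in>UNIV. k x y z * g x y z \<omega>) \<partial>M)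
     = (\<Sum>x\<in>UNIV. \<Sum>y\<in>UNIV. \<Sum>z\<in>UNIV. k x y z * integral\<^sup>L M (g x y z))"
  using assms by (simp add: UNIV_bool)




lemma cell_sum:
  fixes M :: "'a measure" and A C D :: "'a \<Rightarrow> bool" and f :: "'a \<Rightarrow> real"
  assumes "finite_measure M"
    and [measurable]: "A \<in> measurable M (count_space UNIV)"
    "C \<in> measurable M (count_space UNIV)" "D \<in> measurable M (count_space UNIV)"
    and f: "integrable M f"
  shows "(\<integral>\<omega>. indicator (ev M (\<lambda>\<omega>. R (A \<omega>) (C \<omega>) (D \<omega>))) \<omega> * f \<omega> \<partial>M)
    = (\<Sum>x\<in>UNIV. \<Sum>y\<in>UNIV. \<Sum>z\<in>UNIV. (if R x y z then
         (\<integral>\<omega>. indicator (ev M (\<lambda>\<omega>. A \<omega> = x \<and> C \<omega> = y \<and> D \<omega> = z)) \<omega> * f \<omega> \<partial>M) else 0))"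
proof -
  have sets: "ev M (\<lambda>\<omega>. A \<omega> = x \<and> C \<omega> = y \<and> D \<omega> = z) \<in> sets M" for x y z
    unfolding ev_def by measurable
  have int: "integrable M (\<lambda>\<omega>. indicator (ev M (\<lambda>\<omega>. A \<omega> = x \<and> C \<omega> = y \<and> D \<omega> = z)) \<omega> * f \<omega>)" for x y z
    using integrable_real_mult_indicator[OF sets f] by (simp add: mult.commute)
  have pw: "indicator (ev M (\<lambda>\<omega>. R (A \<omega>) (C \<omega>) (D \<omega>))) \<omega> * f \<omega>
     = (\<Sum>x\<in>UNIV. \<Sum>y\<in>UNIV. \<Sum>z\<in>UNIV. (if R x y z then 1 else 0) *
         (indicator (ev M (\<lambda>\<omega>. A \<omega> = x \<and> C \<omega> = y \<and> D \<omega> = z)) \<omega> * f \<omega>))" for \<omega>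
    by (cases "\<omega> \<in> space M"; cases "A \<omega>"; cases "C \<omega>"; cases "D \<omega>")
       (simp_all add: UNIV_bool ev_def indicator_def)
  show ?thesis
    unfolding pw by (subst triple_int[OF int]) (simp add: UNIV_bool)
qed



lemma scale_integral:
  fixes M :: "'a measure" and Y :: "'a \<Rightarrow> real"
  assumes fm: "finite_measure M" and S[measurable]: "S \<in> sets M" and T[measurable]: "T \<in> sets M"
    and Y[measurable]: "Y \<in> borel_measurable M" and c: "c \<ge> 0"
    and h: "\<And>B. B \<in> sets borel \<Longrightarrow> measure M {\<omega>\<in>space M. \<omega>\<in>S \<and> Y \<omega> \<in> B}
                = c * measure M {\<omega>\<in>space M. \<omega>\<in>T \<and> Y \<omega> \<in> B}"
  shows "(\<integral>\<omega>. indicator S \<omega> * Y \<omega> \<partial>M) = c * (\<integral>\<omega>. indicator T \<omega> * Y \<omega> \<partial>M)"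
proof -
  interpret finite_measure M by fact
  define N where "N = (\<lambda>S. distr (density M (\<lambda>x. ennreal (indicator S x))) borel Y)"
  have ind: "(\<lambda>x. ennreal (indicator S x)) = indicator S" for S :: "'a set"
    by (auto simp: indicator_def)
  have emN: "emeasure (N S) B = ennreal (measure M {\<omega>\<in>space M. \<omega>\<in>S \<and> Y \<omega> \<in> B})"
    if "S \<in> sets M" "B \<in> sets borel" for S B
  proof -
    have "emeasure (N S) B = emeasure (density M (indicator S)) (Y -` B \<inter> space M)"
      unfolding N_def ind using that by (simp add: emeasure_distr)
    also have "\<dots> = emeasure M (S \<inter> (Y -` B \<inter> space M))"
      using that by (intro emeasure_restricted) auto
    also have "S \<inter> (Y -` B \<inter> space M) = {\<omega>\<in>space M. \<omega>\<in>S \<and> Y \<omega> \<in> B}" by auto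
    also have "emeasure M \<dots> = ennreal (measure M {\<omega>\<in>space M. \<omega>\<in>S \<and> Y \<omega> \<in> B})"
      using that by (intro emeasure_eq_measure) 
    finally show ?thesis .
  qed
  have eq: "N S = density (N T) (\<lambda>_. ennreal c)"
  proof (rule measure_eqI)
    show "sets (N S) = sets (density (N T) (\<lambda>_. ennreal c))" by (simp add: N_def)
  next
    fix B assume "B \<in> sets (N S)"
    hence B: "B \<in> sets borel" by (simp add: N_def)
    have "emeasure (density (N T) (\<lambda>_. ennreal c)) B = (\<integral>\<^sup>+ x. ennreal c * indicator B x \<partial>N T)"
      using B by (simp add: emeasure_density N_def nn_integral_set_ennreal)
    also have "\<dots> = ennreal c * emeasure (N T) B"
      using B by (intro nn_integral_cmult_indicator) (simp add: N_def)
    also have "\<dots> = emeasure (N S) B"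
      using B by (simp add: emN h c ennreal_mult)
    finally show "emeasure (N S) B = emeasure (density (N T) (\<lambda>_. ennreal c)) B" by simp
  qed
  have intN: "integral\<^sup>L (N S) (\<lambda>y. y) = (\<integral>\<omega>. indicator S \<omega> * Y \<omega> \<partial>M)"
    if [measurable]: "S \<in> sets M" for S
  proof -
    have "integral\<^sup>L (N S) (\<lambda>y. y) = integral\<^sup>L (density M (\<lambda>x. ennreal (indicator S x))) Y"
      unfolding N_def by (subst integral_distr) auto
    also have "\<dots> = (\<integral>\<omega>. indicator S \<omega> * Y \<omega> \<partial>M)"
      by (subst integral_density) auto
    finally show ?thesis .
  qed
  have "integral\<^sup>L (N S) (\<lambda>y. y) = integral\<^sup>L (density (N T) (\<lambda>_. ennreal c)) (\<lambda>y. y)"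
    by (simp add: eq)
  also have "\<dots> = integral\<^sup>L (N T) (\<lambda>y. c *\<^sub>R y)"
    using c by (subst integral_density) (auto simp: N_def)
  also have "\<dots> = c * integral\<^sup>L (N T) (\<lambda>y. y)" by simp
  finally show ?thesis using intN[OF S] intN[OF T] by simp
qed



lemma diffA:
  fixes a1 a0 b11 b10 b01 b00 :: real
  assumes "b11 > 0" "b10 > 0" "b01 > 0" "b00 > 0"
  shows "(a1*b11 + a0*b01)/(b11+b01) - (a1*b10 + a0*b00)/(b10+b00)
     = (a1 - a0) * ((b11*b00 - b10*b01) / ((b11+b01)*(b10+b00)))"
  using assms by (simp add: field_simps)

lemma diffY:
  fixes a1 a0 b11 b10 b01 b00 e1 e0 :: real
  assumes "b11 > 0" "b10 > 0" "b01 > 0" "b00 > 0" "a1 > 0" "a0 > 0"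
  shows "(a1*b11*e1 + a0*b01*e0)/(a1*b11+a0*b01) - (a1*b10*e1 + a0*b00*e0)/(a1*b10+a0*b00)
     = (e1 - e0) * (a1*a0*(b11*b00 - b10*b01) / ((a1*b11+a0*b01)*(a1*b10+a0*b00)))"
proof -
  have "a1*b11+a0*b01 > 0" "a1*b10+a0*b00 > 0" using assms by (auto intro: add_pos_pos)
  thus ?thesis by (simp add: field_simps)
qed

lemma signs:
  fixes u v q :: real and w r :: "bool \<Rightarrow> real"
  assumes "\<And>x. (r x > 0 \<longleftrightarrow> q > 0) \<and> (r x < 0 \<longleftrightarrow> q < 0)"
  shows "((\<forall>x. w x \<ge> 0) \<and> u \<ge> 0 \<or> (\<forall>x. w x \<le> 0) \<and> u \<le> 0 \<longrightarrow>
           (\<forall>x. w x * r x \<ge> 0) \<and> u * q \<ge> 0 \<or> (\<forall>x. w x * r x \<le> 0) \<and> u * q \<le> 0)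
       \<and> ((\<forall>x. w x \<ge> 0) \<and> u \<le> 0 \<or> (\<forall>x. w x \<le> 0) \<and> u \<ge> 0 \<longrightarrow>
           (\<forall>x. w x * r x \<ge> 0) \<and> u * q \<le> 0 \<or> (\<forall>x. w x * r x \<le> 0) \<and> u * q \<ge> 0)"
proof -
  have k1: "\<And>(p1::real) (p2::real). p1 \<ge> 0 \<Longrightarrow> p2 \<le> 0 \<Longrightarrow> p1 * p2 \<le> 0" by (simp add: mult_nonneg_nonpos)
  have k2: "\<And>(p1::real) (p2::real). p1 \<le> 0 \<Longrightarrow> p2 \<le> 0 \<Longrightarrow> p1 * p2 \<ge> 0" by (simp add: mult_nonpos_nonpos)
  have k3: "\<And>(p1::real) (p2::real). p1 \<ge> 0 \<Longrightarrow> p2 \<ge> 0 \<Longrightarrow> p1 * p2 \<ge> 0" by simp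
  have k4: "\<And>(p1::real) (p2::real). p1 \<le> 0 \<Longrightarrow> p2 \<ge> 0 \<Longrightarrow> p1 * p2 \<le> 0" by (simp add: mult_nonpos_nonneg)
  consider "q \<le> 0" "\<And>x. r x \<le> 0" | "q \<ge> 0" "\<And>x. r x \<ge> 0"
    using assms by (metis linorder_le_less_linear order_less_imp_le)
  then show ?thesis
  proof cases
    case 1
    show ?thesis using k1 k2 1 by blast
  next
    case 2
    show ?thesis using k3 k4 2 by blast
  qed
qed

lemma pure:
  fixes a b e :: "bool \<Rightarrow> bool \<Rightarrow> real"
  assumes apos: "\<And>x y. a x y > 0" and bpos: "\<And>y z. b y z > 0"
  defines "EYD \<equiv> \<lambda>x z. (a x True * b True z * e x True + a x False * b False z * e x False)
                        / (a x True * b True z + a x False * b False z)"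
    and "EAD \<equiv> \<lambda>z. (a True True * b True z + a True False * b False z) / (b True z + b False z)"
  shows "((\<forall>x. e x True \<ge> e x False) \<and> a True True \<ge> a True False
            \<or> (\<forall>x. e x True \<le> e x False) \<and> a True True \<le> a True False \<longrightarrow>
           (\<forall>x. EYD x True \<ge> EYD x False) \<and> EAD True \<ge> EAD False
            \<or> (\<forall>x. EYD x True \<le> EYD x False) \<and> EAD True \<le> EAD False)
       \<and> ((\<forall>x. e x True \<ge> e x False) \<and> a True True \<le> a True False
            \<or> (\<forall>x. e x True \<le> e x False) \<and> a True True \<ge> a True False \<longrightarrow>
           (\<forall>x. EYD x True \<ge> EYD x False) \<and> EAD True \<le> EAD False
            \<or> (\<forall>x. EYD x True \<le> EYD x False) \<and> EAD True \<ge> EAD False)"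
proof -
  define \<Delta> where "\<Delta> = b True True * b False False - b True False * b False True"
  define q where "q = \<Delta> / ((b True True + b False True) * (b True False + b False False))"
  define r where "r = (\<lambda>x. a x True * a x False * \<Delta> /
     ((a x True * b True True + a x False * b False True) * (a x True * b True False + a x False * b False False)))"
  have dA: "EAD True - EAD False = (a True True - a True False) * q"
    unfolding EAD_def q_def \<Delta>_def using bpos by (intro diffA) auto
  have dY: "EYD x True - EYD x False = (e x True - e x False) * r x" for x
    unfolding EYD_def r_def \<Delta>_def using bpos apos by (intro diffY) auto
  have qpos: "q > 0 \<longleftrightarrow> \<Delta> > 0" "q < 0 \<longleftrightarrow> \<Delta> < 0"
  proof -
    have "(b True True + b False True) * (b True False + b False False) > 0"
      using bpos by (auto intro!: mult_pos_pos add_pos_pos)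
    thus "q > 0 \<longleftrightarrow> \<Delta> > 0" "q < 0 \<longleftrightarrow> \<Delta> < 0"
      unfolding q_def by (auto simp: zero_less_divide_iff divide_less_0_iff)
  qed
  have rpos: "(r x > 0 \<longleftrightarrow> \<Delta> > 0) \<and> (r x < 0 \<longleftrightarrow> \<Delta> < 0)" for x
  proof -
    have "(a x True * b True True + a x False * b False True) * (a x True * b True False + a x False * b False False) > 0"
      "a x True * a x False > 0"
      using apos bpos by (auto intro!: mult_pos_pos add_pos_pos)
    thus ?thesis unfolding r_def
      by (auto simp: zero_less_divide_iff divide_less_0_iff zero_less_mult_iff mult_less_0_iff)
  qed
  have S: "\<And>x. (r x > 0 \<longleftrightarrow> q > 0) \<and> (r x < 0 \<longleftrightarrow> q < 0)" using rpos qpos by auto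
  have eY: "EYD x True \<ge> EYD x False \<longleftrightarrow> (e x True - e x False) * r x \<ge> 0"
           "EYD x True \<le> EYD x False \<longleftrightarrow> (e x True - e x False) * r x \<le> 0" for x
    using dY[of x] by linarith+
  have eA: "EAD True \<ge> EAD False \<longleftrightarrow> (a True True - a True False) * q \<ge> 0"
           "EAD True \<le> EAD False \<longleftrightarrow> (a True True - a True False) * q \<le> 0"
    using dA by linarith+
  have h1: "e x True \<ge> e x False \<longleftrightarrow> e x True - e x False \<ge> 0"
           "e x True \<le> e x False \<longleftrightarrow> e x True - e x False \<le> 0"  for x by auto
  have h2: "a True True \<ge> a True False \<longleftrightarrow> a True True - a True False \<ge> 0"
           "a True True \<le> a True False \<longleftrightarrow> a True True - a True False \<le> 0" by auto
  show ?thesis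
    unfolding eY eA h1 h2
    by (rule signs[where w="\<lambda>x. e x True - e x False", OF S])
qed
theorem theorem8:
  fixes M :: "'a measure" and A C D :: "'a \<Rightarrow> bool" and Y :: "'a \<Rightarrow> real"
  assumes "prob_space M"
    and "A \<in> measurable M (count_space UNIV)"
    and "C \<in> measurable M (count_space UNIV)"
    and "D \<in> measurable M (count_space UNIV)"
    and "Y \<in> borel_measurable M" and "integrable M Y"
    and factor: "\<And>x y z B. B \<in> sets borel \<Longrightarrow>
        measure M (ev M (\<lambda>\<omega>. A \<omega> = x \<and> C \<omega> = y \<and> D \<omega> = z \<and> Y \<omega> \<in> B))
        = measure M (ev M (\<lambda>\<omega>. D \<omega> = z))
          * cond_prob M (\<lambda>\<omega>. C \<omega> = y) (\<lambda>\<omega>. D \<omega> = z)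
          * cond_prob M (\<lambda>\<omega>. A \<omega> = x) (\<lambda>\<omega>. C \<omega> = y)
          * cond_prob M (\<lambda>\<omega>. Y \<omega> \<in> B) (\<lambda>\<omega>. A \<omega> = x \<and> C \<omega> = y)"
    and dep: "\<not> prob_space.indep_var M (count_space UNIV) C (count_space UNIV) D"
    and pos: "\<And>x y z. measure M (ev M (\<lambda>\<omega>. A \<omega> = x \<and> C \<omega> = y \<and> D \<omega> = z)) > 0"
  shows "((EY_nondec M Y A C \<and> EA_nondec M A C) \<or> (EY_noninc M Y A C \<and> EA_noninc M A C)
            \<longrightarrow> (EY_nondec M Y A D \<and> EA_nondec M A D) \<or> (EY_noninc M Y A D \<and> EA_noninc M A D))
       \<and> ((EY_nondec M Y A C \<and> EA_noninc M A C) \<or> (EY_noninc M Y A C \<and> EA_nondec M A C)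
            \<longrightarrow> (EY_nondec M Y A D \<and> EA_noninc M A D) \<or> (EY_noninc M Y A D \<and> EA_nondec M A D))"
proof -
  interpret prob_space M by fact
  note [measurable] = assms(2-5)
  have fm: "finite_measure M" by unfold_locales
  have int1: "integrable M (\<lambda>_. 1::real)" by simp
  define P where "P x y z = measure M (ev M (\<lambda>\<omega>. A \<omega> = x \<and> C \<omega> = y \<and> D \<omega> = z))" for x y z
  define I where "I x y z = (\<integral>\<omega>. indicator (ev M (\<lambda>\<omega>. A \<omega> = x \<and> C \<omega> = y \<and> D \<omega> = z)) \<omega> * Y \<omega> \<partial>M)" for x y z
  have Ppos: "P x y z > 0" for x y z using pos by (simp add: P_def)
  have evs: "ev M (\<lambda>\<omega>. R (A \<omega>) (C \<omega>) (D \<omega>)) \<in> sets M" for R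
    unfolding ev_def by measurable
  have cells: "ev M (\<lambda>\<omega>. A \<omega> = x \<and> C \<omega> = y \<and> D \<omega> = z) \<in> sets M" for x y z
    unfolding ev_def by measurable
  have meas_sum: "measure M (ev M (\<lambda>\<omega>. R (A \<omega>) (C \<omega>) (D \<omega>)))
     = (\<Sum>x\<in>UNIV. \<Sum>y\<in>UNIV. \<Sum>z\<in>UNIV. (if R x y z then P x y z else 0))" for R
  proof -
    have ii: "(\<integral>\<omega>. indicator S \<omega> * 1 \<partial>M) = measure M S" if "S \<in> sets M" for S
      using that by simp
    have ii2: "(\<integral>\<omega>. indicator (ev M (\<lambda>\<omega>. A \<omega> = x \<and> C \<omega> = y \<and> D \<omega> = z)) \<omega> * 1 \<partial>M) = P x y z" for x y z
      unfolding P_def by (rule ii[OF cells])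
    show ?thesis
      using cell_sum[OF fm assms(2-4) int1, of R] ii[OF evs[of R]]
      unfolding ii2 by simp
  qed
  have int_sum: "(\<integral>\<omega>. indicator (ev M (\<lambda>\<omega>. R (A \<omega>) (C \<omega>) (D \<omega>))) \<omega> * Y \<omega> \<partial>M)
     = (\<Sum>x\<in>UNIV. \<Sum>y\<in>UNIV. \<Sum>z\<in>UNIV. (if R x y z then I x y z else 0))" for R
    unfolding I_def by (rule cell_sum[OF fm assms(2-4) assms(6)])
  have mD: "measure M (ev M (\<lambda>\<omega>. D \<omega> = z)) = P True True z + P True False z + P False True z + P False False z" for z
    using meas_sum[of "\<lambda>a c d. d = z"] by (simp add: UNIV_bool)
  have mC: "measure M (ev M (\<lambda>\<omega>. C \<omega> = y)) = P True y True + P True y False + P False y True + P False y False" for y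
    using meas_sum[of "\<lambda>a c d. c = y"] by (simp add: UNIV_bool)
  have mCD: "measure M (ev M (\<lambda>\<omega>. C \<omega> = y \<and> D \<omega> = z)) = P True y z + P False y z" for y z
    using meas_sum[of "\<lambda>a c d. c = y \<and> d = z"] by (simp add: UNIV_bool)
  have mAC: "measure M (ev M (\<lambda>\<omega>. A \<omega> = x \<and> C \<omega> = y)) = P x y True + P x y False" for x y
    using meas_sum[of "\<lambda>a c d. a = x \<and> c = y"] by (simp add: UNIV_bool)
  have cp1: "cond_prob M (\<lambda>\<omega>. Y \<omega> \<in> UNIV) (\<lambda>\<omega>. A \<omega> = x \<and> C \<omega> = y) = 1" for x y
    unfolding cond_prob_def using mAC[of x y] Ppos[of x y True] Ppos[of x y False] by simp
  define a where "a x y = measure M (ev M (\<lambda>\<omega>. A \<omega> = x \<and> C \<omega> = y)) / measure M (ev M (\<lambda>\<omega>. C \<omega> = y))" for x y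
  define b where "b y z = measure M (ev M (\<lambda>\<omega>. C \<omega> = y \<and> D \<omega> = z))" for y z
  have apos: "a x y > 0" for x y unfolding a_def mAC mC using Ppos by (auto intro!: divide_pos_pos add_pos_pos)
  have bpos: "b y z > 0" for y z unfolding b_def mCD using Ppos by (auto intro!: add_pos_pos)
  have asum: "a False y = 1 - a True y" for y
  proof -
    have "P True y True + P True y False + P False y True + P False y False > 0"
      using Ppos by (auto intro!: add_pos_pos)
    thus ?thesis unfolding a_def mAC mC by (simp add: field_simps)
  qed
  have Pfac: "P x y z = measure M (ev M (\<lambda>\<omega>. D \<omega> = z))
          * cond_prob M (\<lambda>\<omega>. C \<omega> = y) (\<lambda>\<omega>. D \<omega> = z)
          * cond_prob M (\<lambda>\<omega>. A \<omega> = x) (\<lambda>\<omega>. C \<omega> = y)" for x y z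
      using factor[of UNIV x y z] cp1[of x y] by (simp add: P_def)
  have Pab: "P x y z = a x y * b y z" for x y z
  proof -
    have "measure M (ev M (\<lambda>\<omega>. D \<omega> = z))
          * cond_prob M (\<lambda>\<omega>. C \<omega> = y) (\<lambda>\<omega>. D \<omega> = z)
          * cond_prob M (\<lambda>\<omega>. A \<omega> = x) (\<lambda>\<omega>. C \<omega> = y) = a x y * b y z"
    proof -
      have "measure M (ev M (\<lambda>\<omega>. D \<omega> = z)) > 0" "measure M (ev M (\<lambda>\<omega>. C \<omega> = y)) > 0"
        unfolding mD mC using Ppos by (auto intro!: add_pos_pos)
      moreover have "\<And>d c ac cy::real. d > 0 \<Longrightarrow> d * (c / d) * (ac / cy) = ac / cy * c" by simp
      ultimately show ?thesis unfolding cond_prob_def a_def b_def by simp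
    qed
    thus ?thesis using Pfac[of x y z] by simp
  qed
  define J where "J x y = (\<integral>\<omega>. indicator (ev M (\<lambda>\<omega>. A \<omega> = x \<and> C \<omega> = y)) \<omega> * Y \<omega> \<partial>M)" for x y
  define e where "e x y = J x y / measure M (ev M (\<lambda>\<omega>. A \<omega> = x \<and> C \<omega> = y))" for x y
  have IPe: "I x y z = P x y z * e x y" for x y z
  proof -
    have acpos: "measure M (ev M (\<lambda>\<omega>. A \<omega> = x \<and> C \<omega> = y)) > 0"
      unfolding mAC using Ppos by (auto intro!: add_pos_pos)
    have evAC: "ev M (\<lambda>\<omega>. A \<omega> = x \<and> C \<omega> = y) \<in> sets M" unfolding ev_def by measurable
    have "I x y z = P x y z / measure M (ev M (\<lambda>\<omega>. A \<omega> = x \<and> C \<omega> = y)) * J x y"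
      unfolding I_def J_def
    proof (rule scale_integral[OF fm cells evAC assms(5)])
      show "0 \<le> P x y z / measure M (ev M (\<lambda>\<omega>. A \<omega> = x \<and> C \<omega> = y))"
        using Ppos[of x y z] acpos by simp
    next
      fix B :: "real set" assume B: "B \<in> sets borel"
      have s1: "{\<omega> \<in> space M. \<omega> \<in> ev M (\<lambda>\<omega>. A \<omega> = x \<and> C \<omega> = y \<and> D \<omega> = z) \<and> Y \<omega> \<in> B}
          = ev M (\<lambda>\<omega>. A \<omega> = x \<and> C \<omega> = y \<and> D \<omega> = z \<and> Y \<omega> \<in> B)" by (auto simp: ev_def)
      have s2: "{\<omega> \<in> space M. \<omega> \<in> ev M (\<lambda>\<omega>. A \<omega> = x \<and> C \<omega> = y) \<and> Y \<omega> \<in> B}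
          = ev M (\<lambda>\<omega>. Y \<omega> \<in> B \<and> A \<omega> = x \<and> C \<omega> = y)" by (auto simp: ev_def)
      show "measure M {\<omega> \<in> space M. \<omega> \<in> ev M (\<lambda>\<omega>. A \<omega> = x \<and> C \<omega> = y \<and> D \<omega> = z) \<and> Y \<omega> \<in> B}
          = P x y z / measure M (ev M (\<lambda>\<omega>. A \<omega> = x \<and> C \<omega> = y)) *
            measure M {\<omega> \<in> space M. \<omega> \<in> ev M (\<lambda>\<omega>. A \<omega> = x \<and> C \<omega> = y) \<and> Y \<omega> \<in> B}"
        unfolding s1 s2 factor[OF B] Pfac[of x y z] by (simp add: cond_prob_def)
    qed
    thus ?thesis unfolding e_def by simp
  qed
  have eC1: "cond_exp_ev M Y (\<lambda>\<omega>. A \<omega> = x \<and> C \<omega>) = e x True" for x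
    unfolding cond_exp_ev_def e_def J_def by simp
  have eC0: "cond_exp_ev M Y (\<lambda>\<omega>. A \<omega> = x \<and> \<not> C \<omega>) = e x False" for x
    unfolding cond_exp_ev_def e_def J_def by simp
  have eD1: "cond_exp_ev M Y (\<lambda>\<omega>. A \<omega> = x \<and> D \<omega>) =
      (a x True * b True True * e x True + a x False * b False True * e x False)
      / (a x True * b True True + a x False * b False True)" for x
    unfolding cond_exp_ev_def
    using int_sum[of "\<lambda>a c d. a = x \<and> d"] meas_sum[of "\<lambda>a c d. a = x \<and> d"]
    by (cases x) (simp_all add: UNIV_bool IPe Pab ac_simps)
  have eD0: "cond_exp_ev M Y (\<lambda>\<omega>. A \<omega> = x \<and> \<not> D \<omega>) =
      (a x True * b True False * e x True + a x False * b False False * e x False)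
      / (a x True * b True False + a x False * b False False)" for x
    unfolding cond_exp_ev_def
    using int_sum[of "\<lambda>a c d. a = x \<and> \<not> d"] meas_sum[of "\<lambda>a c d. a = x \<and> \<not> d"]
    by (cases x) (simp_all add: UNIV_bool IPe Pab ac_simps)
  have pC1: "cond_prob M A C = a True True" unfolding cond_prob_def a_def by simp
  have pC0: "cond_prob M A (\<lambda>\<omega>. \<not> C \<omega>) = a True False" unfolding cond_prob_def a_def by simp
  have pD1: "cond_prob M A D = (a True True * b True True + a True False * b False True)
      / (b True True + b False True)"
    unfolding cond_prob_def
    using meas_sum[of "\<lambda>a c d. a \<and> d"] mD[of True]
    by (simp add: UNIV_bool Pab asum algebra_simps)
  have pD0: "cond_prob M A (\<lambda>\<omega>. \<not> D \<omega>) = (a True True * b True False + a True False * b False False)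
      / (b True False + b False False)"
    unfolding cond_prob_def
    using meas_sum[of "\<lambda>a c d. a \<and> \<not> d"] mD[of False]
    by (simp add: UNIV_bool Pab asum algebra_simps)
  show ?thesis
    unfolding EY_nondec_def EY_noninc_def EA_nondec_def EA_noninc_def
      eC1 eC0 eD1 eD0 pC1 pC0 pD1 pD0
    using pure[OF apos bpos, of e] by simp
qed

end
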